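(* Let $A$ be an integral domain with fraction field $K$ and spectrum $S$. Let $F \in A[Y]$ be a nonconstant polynomial, and put $X_F = \mathrm{Spec}(A[Y]/(F))$. (1) For a prime ideal $\mathfrak p$ of $A$, the following are equivalent: (i) $\mathfrak p \in \mathrm{Rel}(X_F/S)$; (ii) the image of $F$ in $\kappa(\mathfrak p)[Y]$ has a root in $\kappa(\mathfrak p)$; (iii) there exist $g \in A \setminus \mathfrak p$ and $b \in A_g$ such that $F(b) \in \mathfrak p A_{\mathfrak p}$. (2) The following are equivalent: (i) $\mathrm{Rel}(X_F/S)$ is dense in $S$; (ii) for every nonzero $g \in A$, there exist $u \in A$ and $b \in A_{ug}$ such that $F(b) \notin A_{ug}^\times$; (iii) for every nonzero $g \in A$, there exist $u \in A$, $b \in A_{ug}$ and $\mathfrak p \in D(ug)$ such that $F(b) \in \mathfrak p A_{\mathfrak p}$.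
   Context: For a morphism $f : X \to S$, $\mathrm{Rel}(f)$ (also written $\mathrm{Rel}(X/S)$) is the set of $f(x)$, $x \in X$, such that $\kappa(f(x)) = \kappa(x)$ (trivial residue field extension). For $t \in A$, $A_t$ is the localization at the powers of $t$, and $D(t) = \mathrm{Spec}(A_t) \subset \mathrm{Spec}(A)$. *)

theory Defs
  imports "HOL-Computational_Algebra.Fraction_Field" "HOL-Computational_Algebra.Polynomial"
begin

definition is_ideal :: "'r::comm_ring_1 set \<Rightarrow> bool" where
  "is_ideal I \<longleftrightarrow> 0 \<in> I \<and> (\<forall>x\<in>I. \<forall>y\<in>I. x + y \<in> I) \<and> (\<forall>r. \<forall>x\<in>I. r * x \<in> I)"

definition prime_ideal :: "'r::comm_ring_1 set \<Rightarrow> bool" where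
  "prime_ideal P \<longleftrightarrow> is_ideal P \<and> P \<noteq> UNIV \<and> (\<forall>a b. a * b \<in> P \<longrightarrow> a \<in> P \<or> b \<in> P)"

definition zariski_open :: "'r::comm_ring_1 set set \<Rightarrow> bool" where
  "zariski_open U \<longleftrightarrow> (\<exists>I. U = {P. prime_ideal P \<and> \<not> I \<subseteq> P})"

definition zariski_dense :: "'r::comm_ring_1 set set \<Rightarrow> bool" where
  "zariski_dense T \<longleftrightarrow> T \<subseteq> {P. prime_ideal P} \<and>
     (\<forall>U. zariski_open U \<and> U \<noteq> {} \<longrightarrow> U \<inter> T \<noteq> {})"

definition basic_open :: "'r::comm_ring_1 \<Rightarrow> 'r set set" where
  "basic_open t = {P. prime_ideal P \<and> t \<notin> P}"

(* For a domain R, localizations are realised inside the fraction field R fract *)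
definition loc_prime :: "'r::idom set \<Rightarrow> 'r fract set" where
  "loc_prime P = {Fraction_Field.Fract a s | a s. s \<notin> P}"

definition max_loc :: "'r::idom set \<Rightarrow> 'r fract set" where
  "max_loc P = {Fraction_Field.Fract a s | a s. a \<in> P \<and> s \<notin> P}"

definition loc_elem :: "'r::idom \<Rightarrow> 'r fract set" where
  "loc_elem t = {Fraction_Field.Fract a (t ^ n) | a n. True}"

(* units of R_t; for t = 0, R_t is the zero ring, in which every element is a unit *)
definition loc_units :: "'r::idom \<Rightarrow> 'r fract set" where
  "loc_units t = (if t = 0 then loc_elem t
                  else {x \<in> loc_elem t. \<exists>y \<in> loc_elem t. x * y = 1})"

(* residue field kappa(P) = R_P / P R_P : residue classes *)
definition res_class :: "'r::idom set \<Rightarrow> 'r fract \<Rightarrow> 'r fract set" where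
  "res_class P x = {y \<in> loc_prime P. x - y \<in> max_loc P}"

definition kappa :: "'r::idom set \<Rightarrow> 'r fract set set" where
  "kappa P = res_class P ` loc_prime P"

definition fract_poly :: "'r::idom poly \<Rightarrow> 'r fract poly" where
  "fract_poly F = map_poly (\<lambda>a. Fraction_Field.Fract a 1) F"

(* evaluation of the image of F in kappa(P)[Y] at a class c (ring operations
   of the quotient are computed on representatives) *)
definition kappa_eval :: "'r::idom set \<Rightarrow> 'r poly \<Rightarrow> 'r fract set \<Rightarrow> 'r fract set" where
  "kappa_eval P F c = res_class P (poly (fract_poly F) (SOME x. x \<in> c))"

definition kappa_has_root :: "'r::idom set \<Rightarrow> 'r poly \<Rightarrow> bool" where
  "kappa_has_root P F \<longleftrightarrow> (\<exists>c \<in> kappa P. kappa_eval P F c = res_class P 0)"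

(* For a prime Q of A[Y], its image p = Q \<inter> A in Spec A, and the condition that the
   induced map kappa(p) \<rightarrow> kappa(Q), [a/s] \<mapsto> [[:a:]/[:s:]], is surjective
   (it is always an injective field map, so this says kappa(p) = kappa(Q)). *)
definition contract :: "'a::idom poly set \<Rightarrow> 'a set" where
  "contract Q = {a. [:a:] \<in> Q}"

definition trivial_residue_ext :: "'a::idom poly set \<Rightarrow> bool" where
  "trivial_residue_ext Q \<longleftrightarrow>
     (\<forall>c \<in> kappa Q. \<exists>a s. s \<notin> contract Q \<and> c = res_class Q (Fraction_Field.Fract [:a:] [:s:]))"

(* Rel(X_F/S), X_F = Spec(A[Y]/(F)); points of X_F are the primes Q of A[Y] with F \<in> Q *)
definition Rel_XF :: "'a::idom poly \<Rightarrow> 'a set set" where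
  "Rel_XF F = {contract Q | Q. prime_ideal Q \<and> F \<in> Q \<and> trivial_residue_ext Q}"

end

theory Submission
  imports Defs
begin


section \<open>Ideals\<close>

lemma pi_zero: "prime_ideal P \<Longrightarrow> 0 \<in> P"
  by (simp add: prime_ideal_def is_ideal_def)

lemma pi_mult: "prime_ideal P \<Longrightarrow> x \<in> P \<Longrightarrow> r * x \<in> P"
  by (simp add: prime_ideal_def is_ideal_def)

lemma pi_mult2: "prime_ideal P \<Longrightarrow> x \<in> P \<Longrightarrow> x * r \<in> P"
  using pi_mult[of P x r] by (simp add: mult.commute)

lemma pi_add: "prime_ideal P \<Longrightarrow> x \<in> P \<Longrightarrow> y \<in> P \<Longrightarrow> x + y \<in> P"
  by (simp add: prime_ideal_def is_ideal_def)

lemma pi_neg: "prime_ideal P \<Longrightarrow> x \<in> P \<Longrightarrow> - x \<in> P"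
  using pi_mult[of P x "-1"] by simp

lemma pi_diff: "prime_ideal P \<Longrightarrow> x \<in> P \<Longrightarrow> y \<in> P \<Longrightarrow> x - y \<in> P"
  using pi_add[of P x "-y"] pi_neg[of P y] by simp

lemma pi_one: "prime_ideal P \<Longrightarrow> 1 \<notin> P"
proof
  assume P: "prime_ideal P" and "1 \<in> P"
  then have "\<forall>r. r \<in> P" using pi_mult[of P 1] by auto
  then show False using P by (auto simp: prime_ideal_def)
qed

lemma pi_nz: "prime_ideal P \<Longrightarrow> s \<notin> P \<Longrightarrow> s \<noteq> 0"
  using pi_zero by auto

lemma pi_prime: "prime_ideal P \<Longrightarrow> a * b \<in> P \<Longrightarrow> a \<in> P \<or> b \<in> P"
  by (simp add: prime_ideal_def)

lemma pi_mult_notin: "prime_ideal P \<Longrightarrow> a \<notin> P \<Longrightarrow> b \<notin> P \<Longrightarrow> a * b \<notin> P"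
  using pi_prime by blast

lemma pi_power: "prime_ideal P \<Longrightarrow> s \<notin> P \<Longrightarrow> s ^ n \<notin> P"
  by (induction n) (auto simp: pi_one pi_mult_notin)

section \<open>Localization at a prime\<close>

lemma loc_primeI: "s \<notin> P \<Longrightarrow> Fraction_Field.Fract a s \<in> loc_prime P"
  by (auto simp: loc_prime_def)

lemma loc_primeE: "x \<in> loc_prime P \<Longrightarrow> (\<And>a s. s \<notin> P \<Longrightarrow> x = Fraction_Field.Fract a s \<Longrightarrow> thesis) \<Longrightarrow> thesis"
  by (auto simp: loc_prime_def)

lemma max_locI: "a \<in> P \<Longrightarrow> s \<notin> P \<Longrightarrow> Fraction_Field.Fract a s \<in> max_loc P"
  by (auto simp: max_loc_def)

lemma max_loc_iff:
  assumes P: "prime_ideal P" and s: "s \<notin> P"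
  shows "Fraction_Field.Fract a s \<in> max_loc P \<longleftrightarrow> a \<in> P"
proof
  assume "Fraction_Field.Fract a s \<in> max_loc P"
  then obtain a' s' where a': "a' \<in> P" "s' \<notin> P" "Fraction_Field.Fract a s = Fraction_Field.Fract a' s'"
    by (auto simp: max_loc_def)
  then have "a * s' = a' * s" using eq_fract(1)[of s s' a a'] pi_nz[OF P] s by auto
  also have "\<dots> \<in> P" using pi_mult2[OF P a'(1)] .
  finally show "a \<in> P" using pi_prime[OF P] a'(2) by blast
qed (auto intro: max_locI[OF _ s])

lemma max_loc_sub: "max_loc P \<subseteq> loc_prime P"
  by (auto simp: max_loc_def loc_prime_def)

lemma loc_prime_const: "prime_ideal P \<Longrightarrow> Fraction_Field.Fract a 1 \<in> loc_prime P"
  using pi_one by (auto intro: loc_primeI)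

lemma loc_prime_0: "prime_ideal P \<Longrightarrow> 0 \<in> loc_prime P"
  using loc_prime_const[of P 0] by (simp add: Zero_fract_def)

lemma loc_prime_1: "prime_ideal P \<Longrightarrow> 1 \<in> loc_prime P"
  using loc_prime_const[of P 1] by (simp add: One_fract_def)

lemma max_loc_0: "prime_ideal P \<Longrightarrow> 0 \<in> max_loc P"
  using pi_one pi_zero by (auto simp: Zero_fract_def intro!: max_locI)

lemma max_loc_1: "prime_ideal P \<Longrightarrow> 1 \<notin> max_loc P"
  using pi_one[of P] max_loc_iff[of P 1 1] by (simp add: One_fract_def)

lemma loc_prime_add: "prime_ideal P \<Longrightarrow> x \<in> loc_prime P \<Longrightarrow> y \<in> loc_prime P \<Longrightarrow> x + y \<in> loc_prime P"
  by (auto elim!: loc_primeE simp: pi_nz pi_mult_notin intro!: loc_primeI)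

lemma loc_prime_mult: "prime_ideal P \<Longrightarrow> x \<in> loc_prime P \<Longrightarrow> y \<in> loc_prime P \<Longrightarrow> x * y \<in> loc_prime P"
  by (auto elim!: loc_primeE simp: pi_nz pi_mult_notin intro!: loc_primeI)

lemma loc_prime_neg: "prime_ideal P \<Longrightarrow> x \<in> loc_prime P \<Longrightarrow> - x \<in> loc_prime P"
  by (auto elim!: loc_primeE simp: pi_nz pi_mult_notin intro!: loc_primeI)

lemma loc_prime_diff: "prime_ideal P \<Longrightarrow> x \<in> loc_prime P \<Longrightarrow> y \<in> loc_prime P \<Longrightarrow> x - y \<in> loc_prime P"
  using loc_prime_add[of P x "-y"] loc_prime_neg[of P y] by simp

lemma max_locE: "x \<in> max_loc P \<Longrightarrow> (\<And>a s. a \<in> P \<Longrightarrow> s \<notin> P \<Longrightarrow> x = Fraction_Field.Fract a s \<Longrightarrow> thesis) \<Longrightarrow> thesis"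
  by (auto simp: max_loc_def)

lemma max_loc_add: "prime_ideal P \<Longrightarrow> x \<in> max_loc P \<Longrightarrow> y \<in> max_loc P \<Longrightarrow> x + y \<in> max_loc P"
  by (auto elim!: max_locE simp: pi_nz pi_mult_notin pi_add pi_mult pi_mult2 intro!: max_locI)

lemma max_loc_neg: "prime_ideal P \<Longrightarrow> x \<in> max_loc P \<Longrightarrow> - x \<in> max_loc P"
  by (auto elim!: max_locE simp: pi_nz pi_neg intro!: max_locI)

lemma max_loc_diff: "prime_ideal P \<Longrightarrow> x \<in> max_loc P \<Longrightarrow> y \<in> max_loc P \<Longrightarrow> x - y \<in> max_loc P"
  using max_loc_add[of P x "-y"] max_loc_neg[of P y] by simp

lemma max_loc_mult: "prime_ideal P \<Longrightarrow> x \<in> loc_prime P \<Longrightarrow> y \<in> max_loc P \<Longrightarrow> x * y \<in> max_loc P"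
  by (auto elim!: max_locE loc_primeE simp: pi_nz pi_mult_notin pi_mult intro!: max_locI)

lemma max_loc_mult2: "prime_ideal P \<Longrightarrow> x \<in> loc_prime P \<Longrightarrow> y \<in> max_loc P \<Longrightarrow> y * x \<in> max_loc P"
  using max_loc_mult[of P x y] by (simp add: mult.commute)

lemma max_loc_prime:
  assumes P: "prime_ideal P" and x: "x \<in> loc_prime P" and y: "y \<in> loc_prime P"
    and xy: "x * y \<in> max_loc P"
  shows "x \<in> max_loc P \<or> y \<in> max_loc P"
proof -
  obtain a s where as: "s \<notin> P" "x = Fraction_Field.Fract a s" using x by (auto elim: loc_primeE)
  obtain b t where bt: "t \<notin> P" "y = Fraction_Field.Fract b t" using y by (auto elim: loc_primeE)
  have "a * b \<in> P" using xy as bt max_loc_iff[OF P pi_mult_notin[OF P as(1) bt(1)]] by simp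
  then show ?thesis using pi_prime[OF P] max_loc_iff[OF P] as bt by auto
qed

section \<open>Polynomials\<close>

lemma poly_loc_prime:
  assumes P: "prime_ideal P" and "\<forall>i. coeff \<Phi> i \<in> loc_prime P" and x: "x \<in> loc_prime P"
  shows "poly \<Phi> x \<in> loc_prime P"
  using assms(2)
proof (induction \<Phi>)
  case 0 then show ?case using loc_prime_0[OF P] by simp
next
  case (pCons c \<Phi>)
  have c: "c \<in> loc_prime P" using pCons.prems[rule_format, of 0] by simp
  have "\<forall>i. coeff \<Phi> i \<in> loc_prime P" using pCons.prems[rule_format, of "Suc i" for i] by simp
  then have "poly \<Phi> x \<in> loc_prime P" by (rule pCons.IH)
  then show ?case using c x by (simp add: loc_prime_add[OF P] loc_prime_mult[OF P])
qed

lemma poly_cong: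
  assumes P: "prime_ideal P" and "\<forall>i. coeff \<Phi> i \<in> loc_prime P" and x: "x \<in> loc_prime P"
    and y: "y \<in> loc_prime P" and xy: "x - y \<in> max_loc P"
  shows "poly \<Phi> x - poly \<Phi> y \<in> max_loc P"
  using assms(2)
proof (induction \<Phi>)
  case 0 then show ?case using max_loc_0[OF P] by simp
next
  case (pCons c \<Phi>)
  have co: "\<forall>i. coeff \<Phi> i \<in> loc_prime P" using pCons.prems[rule_format, of "Suc i" for i] by simp
  then have ih: "poly \<Phi> x - poly \<Phi> y \<in> max_loc P" by (rule pCons.IH)
  have py: "poly \<Phi> y \<in> loc_prime P" using poly_loc_prime[OF P co y] .
  have "poly (pCons c \<Phi>) x - poly (pCons c \<Phi>) y = x * (poly \<Phi> x - poly \<Phi> y) + (x - y) * poly \<Phi> y"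
    by (simp add: algebra_simps)
  also have "\<dots> \<in> max_loc P"
    using ih py x xy by (intro max_loc_add[OF P] max_loc_mult[OF P] max_loc_mult2[OF P])
  finally show ?case .
qed

lemma fract_poly_pCons: "fract_poly (pCons a G) = pCons (Fraction_Field.Fract a 1) (fract_poly G)"
  unfolding fract_poly_def by (rule map_poly_pCons) (simp add: Zero_fract_def)

lemma fract_poly_0 [simp]: "fract_poly 0 = 0"
  by (simp add: fract_poly_def)

lemma coeff_fract_poly: "coeff (fract_poly G) i = Fraction_Field.Fract (coeff G i) 1"
  unfolding fract_poly_def by (rule coeff_map_poly) (simp add: Zero_fract_def)

lemma fract_poly_add: "fract_poly (G + H) = fract_poly G + fract_poly H"
  by (rule poly_eqI) (simp add: coeff_fract_poly)

lemma fract_poly_neg: "fract_poly (- G) = - fract_poly G"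
  by (rule poly_eqI) (simp add: coeff_fract_poly)

lemma fract_poly_diff: "fract_poly (G - H) = fract_poly G - fract_poly H"
  by (rule poly_eqI) (simp add: coeff_fract_poly)

lemma fract_poly_const: "fract_poly [:a:] = [:Fraction_Field.Fract a 1:]"
  by (simp add: fract_poly_pCons)

lemma fract_poly_smult: "fract_poly (smult a G) = smult (Fraction_Field.Fract a 1) (fract_poly G)"
  by (rule poly_eqI) (simp add: coeff_fract_poly)

lemma fract_poly_mult: "fract_poly (G * H) = fract_poly G * fract_poly H"
proof (induction G)
  case 0 then show ?case by simp
next
  case (pCons a G)
  have "fract_poly (pCons a G * H) = fract_poly (smult a H + pCons 0 (G * H))" by simp
  also have "\<dots> = smult (Fraction_Field.Fract a 1) (fract_poly H) + pCons 0 (fract_poly G * fract_poly H)"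
    by (simp add: fract_poly_add fract_poly_smult fract_poly_pCons pCons.IH Zero_fract_def[symmetric])
  also have "\<dots> = fract_poly (pCons a G) * fract_poly H" by (simp add: fract_poly_pCons)
  finally show ?case .
qed

lemma fract_poly_1: "fract_poly 1 = 1"
  by (simp add: fract_poly_def One_fract_def[symmetric])

lemma poly_fract_poly_const: "poly (fract_poly F) (Fraction_Field.Fract a 1) = Fraction_Field.Fract (poly F a) 1"
  by (induction F) (simp_all add: fract_poly_pCons Zero_fract_def)

lemma poly_fract_poly_loc_prime:
  "prime_ideal P \<Longrightarrow> x \<in> loc_prime P \<Longrightarrow> poly (fract_poly F) x \<in> loc_prime P"
  by (rule poly_loc_prime) (auto simp: coeff_fract_poly loc_prime_const)



abbreviation "Eroot P F \<equiv> (\<exists>b \<in> loc_prime P. poly (fract_poly F) b \<in> max_loc P)"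

lemma res_class_self: "prime_ideal P \<Longrightarrow> x \<in> loc_prime P \<Longrightarrow> x \<in> res_class P x"
  using max_loc_0 by (simp add: res_class_def)

lemma kappa_iff:
  assumes P: "prime_ideal P"
  shows "kappa_has_root P F \<longleftrightarrow> Eroot P F"
proof
  assume "kappa_has_root P F"
  then obtain x where x: "x \<in> loc_prime P" and
     e: "res_class P (poly (fract_poly F) (SOME y. y \<in> res_class P x)) = res_class P 0"
    by (auto simp: kappa_has_root_def kappa_def kappa_eval_def)
  define y where "y = (SOME y. y \<in> res_class P x)"
  have "y \<in> res_class P x" unfolding y_def using res_class_self[OF P x] by (rule someI)
  then have y: "y \<in> loc_prime P" by (simp add: res_class_def)
  have "0 \<in> res_class P (poly (fract_poly F) y)"
    using e res_class_self[OF P loc_prime_0[OF P]] by (simp add: y_def)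
  then have "poly (fract_poly F) y \<in> max_loc P" by (simp add: res_class_def)
  then show "Eroot P F" using y by blast
next
  assume "Eroot P F"
  then obtain b where b: "b \<in> loc_prime P" "poly (fract_poly F) b \<in> max_loc P" by blast
  define y where "y = (SOME y. y \<in> res_class P b)"
  have "y \<in> res_class P b" unfolding y_def using res_class_self[OF P b(1)] by (rule someI)
  then have y: "y \<in> loc_prime P" "b - y \<in> max_loc P" by (auto simp: res_class_def)
  have "poly (fract_poly F) b - poly (fract_poly F) y \<in> max_loc P"
    by (rule poly_cong[OF P _ b(1) y]) (auto simp: coeff_fract_poly loc_prime_const P)
  then have Fy: "poly (fract_poly F) y \<in> max_loc P"
    using max_loc_diff[OF P b(2)] by force
  have "res_class P (poly (fract_poly F) y) = res_class P 0"
  proof (auto simp: res_class_def)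
    fix z assume "z \<in> loc_prime P" "poly (fract_poly F) y - z \<in> max_loc P"
    then show "- z \<in> max_loc P" using max_loc_diff[OF P _ Fy] by force
  next
    fix z assume "z \<in> loc_prime P" "- z \<in> max_loc P"
    then show "poly (fract_poly F) y - z \<in> max_loc P" using max_loc_add[OF P Fy] by force
  qed
  moreover have "res_class P b \<in> kappa P" using b(1) by (simp add: kappa_def)
  ultimately show "kappa_has_root P F"
    unfolding kappa_has_root_def kappa_eval_def y_def by blast
qed

lemma iii_iff:
  assumes P: "prime_ideal P"
  shows "(\<exists>g b. g \<notin> P \<and> b \<in> loc_elem g \<and> poly (fract_poly F) b \<in> max_loc P) \<longleftrightarrow> Eroot P F"
proof
  assume "\<exists>g b. g \<notin> P \<and> b \<in> loc_elem g \<and> poly (fract_poly F) b \<in> max_loc P"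
  then obtain g b where "g \<notin> P" "b \<in> loc_elem g" "poly (fract_poly F) b \<in> max_loc P" by blast
  then show "Eroot P F" using pi_power[OF P]
    by (auto simp: loc_elem_def intro!: loc_primeI)
next
  assume "Eroot P F"
  then obtain b where b: "b \<in> loc_prime P" "poly (fract_poly F) b \<in> max_loc P" by blast
  obtain a s where "s \<notin> P" "b = Fraction_Field.Fract a s" using b(1) by (auto elim: loc_primeE)
  then have "s \<notin> P \<and> b \<in> loc_elem s" unfolding loc_elem_def by (auto intro!: exI[of _ a] exI[of _ "1::nat"])
  then show "\<exists>g b. g \<notin> P \<and> b \<in> loc_elem g \<and> poly (fract_poly F) b \<in> max_loc P" using b(2) by blast
qed



lemma const_mult: "[:a:] * [:b:] = [:a * b::'a::comm_ring_1:]"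
  by (simp add: mult_pCons_left)

lemma contract_prime:
  assumes Q: "prime_ideal Q"
  shows "prime_ideal (contract Q)"
  unfolding prime_ideal_def is_ideal_def contract_def
proof (intro conjI allI ballI impI)
  show "0 \<in> {a. [:a:] \<in> Q}" using pi_zero[OF Q] by simp
  fix x y assume "x \<in> {a. [:a:] \<in> Q}" "y \<in> {a. [:a:] \<in> Q}"
  then show "x + y \<in> {a. [:a:] \<in> Q}" using pi_add[OF Q, of "[:x:]" "[:y:]"] by simp
next
  fix r x assume "x \<in> {a. [:a:] \<in> Q}"
  then show "r * x \<in> {a. [:a:] \<in> Q}" using pi_mult[OF Q, of "[:x:]" "[:r:]"] by (simp add: const_mult mult.commute)
next
  show "{a. [:a:] \<in> Q} \<noteq> UNIV" using pi_one[OF Q] by (auto simp: one_pCons)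
next
  fix a b assume "a * b \<in> {a. [:a:] \<in> Q}"
  then show "a \<in> {a. [:a:] \<in> Q} \<or> b \<in> {a. [:a:] \<in> Q}"
    using pi_prime[OF Q, of "[:a:]" "[:b:]"] by (simp add: const_mult mult.commute)
qed

lemma res_class_eq:
  assumes P: "prime_ideal P" and "x - x' \<in> max_loc P"
  shows "res_class P x = res_class P x'"
proof -
  have "x' - z \<in> max_loc P \<longleftrightarrow> x - z \<in> max_loc P" for z
  proof
    assume "x' - z \<in> max_loc P"
    then show "x - z \<in> max_loc P" using max_loc_add[OF P assms(2)] by force
  next
    assume "x - z \<in> max_loc P"
    then show "x' - z \<in> max_loc P" using max_loc_diff[OF P _ assms(2)] by force
  qed
  then show ?thesis by (auto simp: res_class_def)
qed

definition liftp :: "'a::idom poly \<Rightarrow> 'a poly fract poly" where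
  "liftp F = map_poly (\<lambda>e. Fraction_Field.Fract [:e:] 1) F"

lemma liftp_pCons: "liftp (pCons e F) = pCons (Fraction_Field.Fract [:e:] 1) (liftp F)"
  unfolding liftp_def by (rule map_poly_pCons) (simp add: Zero_fract_def)

lemma coeff_liftp: "coeff (liftp F) i = Fraction_Field.Fract [:coeff F i:] 1"
  unfolding liftp_def by (rule coeff_map_poly) (simp add: Zero_fract_def)

lemma poly_liftp_Y: "poly (liftp F) (Fraction_Field.Fract [:0,1:] 1) = Fraction_Field.Fract F 1"
proof (induction F)
  case 0 then show ?case by (simp add: liftp_def Zero_fract_def)
next
  case (pCons e F)
  have "pCons e F = [:e:] + [:0,1:] * F" by simp
  then show ?case using pCons by (simp add: liftp_pCons)
qed

lemma poly_both:
  assumes s: "s \<noteq> 0"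
  shows "\<exists>c n. poly (fract_poly F) (Fraction_Field.Fract a s) = Fraction_Field.Fract c (s ^ n) \<and>
     poly (liftp F) (Fraction_Field.Fract [:a:] [:s:]) = Fraction_Field.Fract [:c:] [:s ^ n:]"
proof (induction F)
  case 0 then show ?case
    by (auto simp: liftp_def Zero_fract_def eq_fract intro!: exI[of _ 0] exI[of _ "0::nat"])
next
  case (pCons e F)
  then obtain c n where cn: "poly (fract_poly F) (Fraction_Field.Fract a s) = Fraction_Field.Fract c (s ^ n)"
     "poly (liftp F) (Fraction_Field.Fract [:a:] [:s:]) = Fraction_Field.Fract [:c:] [:s ^ n:]" by blast
  show ?case
    apply (rule exI[of _ "e * (s * s ^ n) + a * c"], rule exI[of _ "Suc n"])
    using s cn by (simp add: fract_poly_pCons liftp_pCons const_mult algebra_simps)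
qed



lemma Rel_to_E:
  assumes "p \<in> Rel_XF F"
  shows "Eroot p F"
proof -
  obtain Q where Q: "prime_ideal Q" "F \<in> Q" "trivial_residue_ext Q" and pQ: "p = contract Q"
    using assms by (auto simp: Rel_XF_def)
  have p: "prime_ideal p" using contract_prime[OF Q(1)] pQ by simp
  define Y where "Y = Fraction_Field.Fract [:0::'a,1:] 1"
  have Y: "Y \<in> loc_prime Q" unfolding Y_def using pi_one[OF Q(1)] by (rule loc_primeI)
  have "res_class Q Y \<in> kappa Q" using Y by (simp add: kappa_def)
  then obtain a s where as: "s \<notin> contract Q" "res_class Q Y = res_class Q (Fraction_Field.Fract [:a:] [:s:])"
    using Q(3) unfolding trivial_residue_ext_def by blast
  have sQ: "[:s:] \<notin> Q" using as(1) by (simp add: contract_def)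
  have s0: "s \<noteq> 0" using as(1) pi_zero[OF p] pQ by auto
  define x where "x = Fraction_Field.Fract [:a:] [:s:]"
  have x: "x \<in> loc_prime Q" unfolding x_def using sQ by (rule loc_primeI)
  have "Y \<in> res_class Q x" using res_class_self[OF Q(1) Y] as(2) x_def by simp
  then have xY: "x - Y \<in> max_loc Q" by (simp add: res_class_def)
  obtain c n where cn: "poly (fract_poly F) (Fraction_Field.Fract a s) = Fraction_Field.Fract c (s ^ n)"
     "poly (liftp F) x = Fraction_Field.Fract [:c:] [:s ^ n:]"
    using poly_both[OF s0, of F a] x_def by blast
  have "poly (liftp F) x - poly (liftp F) Y \<in> max_loc Q"
    by (rule poly_cong[OF Q(1) _ x Y xY]) (auto simp: coeff_liftp loc_prime_const Q(1))
  moreover have "poly (liftp F) Y \<in> max_loc Q"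
    unfolding Y_def poly_liftp_Y using Q(2) pi_one[OF Q(1)] by (rule max_locI)
  ultimately have "poly (liftp F) x \<in> max_loc Q" using max_loc_add[OF Q(1)] by force
  moreover have "[:s ^ n:] \<notin> Q" using pi_power[OF p, of s n] as(1) pQ by (simp add: contract_def)
  ultimately have "[:c:] \<in> Q" using cn(2) max_loc_iff[OF Q(1)] by simp
  then have "c \<in> p" using pQ by (simp add: contract_def)
  then have "poly (fract_poly F) (Fraction_Field.Fract a s) \<in> max_loc p"
    using cn(1) pi_power[OF p, of s n] as(1) pQ by (auto intro!: max_locI)
  moreover have "Fraction_Field.Fract a s \<in> loc_prime p" using as(1) pQ by (auto intro!: loc_primeI)
  ultimately show ?thesis by blast
qed



lemma E_to_Rel:
  assumes p: "prime_ideal p" and b: "b \<in> loc_prime p" and Fb: "poly (fract_poly F) b \<in> max_loc p"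
  shows "p \<in> Rel_XF F"
proof -
  define ev where "ev G = poly (fract_poly G) b" for G
  have ev_add: "ev (G + H) = ev G + ev H" for G H by (simp add: ev_def fract_poly_add)
  have ev_mult: "ev (G * H) = ev G * ev H" for G H by (simp add: ev_def fract_poly_mult)
  have ev_diff: "ev (G - H) = ev G - ev H" for G H by (simp add: ev_def fract_poly_diff)
  have ev_const: "ev [:a:] = Fraction_Field.Fract a 1" for a by (simp add: ev_def fract_poly_const)
  have ev_loc: "ev G \<in> loc_prime p" for G unfolding ev_def by (rule poly_fract_poly_loc_prime[OF p b])
  define Q where "Q = {G. ev G \<in> max_loc p}"
  have Q: "prime_ideal Q"
    unfolding prime_ideal_def is_ideal_def
  proof (intro conjI ballI allI impI)
    show "0 \<in> Q" using max_loc_0[OF p] by (simp add: Q_def ev_def)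
    show "x + y \<in> Q" if "x \<in> Q" "y \<in> Q" for x y
      using that max_loc_add[OF p] by (simp add: Q_def ev_add)
    show "r * x \<in> Q" if "x \<in> Q" for r x
      using that max_loc_mult[OF p ev_loc] by (simp add: Q_def ev_mult)
    have "(1::'a poly) \<notin> Q" using max_loc_1[OF p] by (simp add: Q_def ev_def fract_poly_1)
    then show "Q \<noteq> UNIV" by blast
    show "a \<in> Q \<or> b \<in> Q" if "a * b \<in> Q" for a b
      using that max_loc_prime[OF p ev_loc ev_loc] by (simp add: Q_def ev_mult)
  qed
  have cQ: "contract Q = p"
    using max_loc_iff[OF p pi_one[OF p]] by (auto simp: contract_def Q_def ev_const)
  have FQ: "F \<in> Q" using Fb by (simp add: Q_def ev_def)
  have triv: "trivial_residue_ext Q"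
    unfolding trivial_residue_ext_def
  proof
    fix c assume "c \<in> kappa Q"
    then obtain G H where c: "c = res_class Q (Fraction_Field.Fract G H)" and H: "H \<notin> Q"
      by (auto simp: kappa_def loc_prime_def)
    obtain a1 s1 where 1: "s1 \<notin> p" "ev G = Fraction_Field.Fract a1 s1" using ev_loc[of G] by (auto elim: loc_primeE)
    obtain a2 s2 where 2: "s2 \<notin> p" "ev H = Fraction_Field.Fract a2 s2" using ev_loc[of H] by (auto elim: loc_primeE)
    have a2: "a2 \<notin> p" using H 2 max_loc_iff[OF p 2(1)] by (simp add: Q_def)
    define a where "a = a1 * s2"
    define s where "s = s1 * a2"
    have s: "s \<notin> p" unfolding s_def using pi_mult_notin[OF p 1(1) a2] .
    have sQ: "[:s:] \<notin> Q" using s cQ unfolding contract_def by blast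
    have H0: "H \<noteq> 0" using H pi_zero[OF Q] by auto
    have s0: "[:s:] \<noteq> 0" using sQ pi_zero[OF Q] by auto
    have "ev (G * [:s:] - [:a:] * H) = 0"
      using 1 2 pi_nz[OF p] s0 unfolding ev_diff ev_mult ev_const a_def s_def
      by (simp add: algebra_simps Zero_fract_def eq_fract)
    then have "G * [:s:] - [:a:] * H \<in> Q" using max_loc_0[OF p] by (simp add: Q_def)
    then have "Fraction_Field.Fract G H - Fraction_Field.Fract [:a:] [:s:] \<in> max_loc Q"
      using H0 s0 pi_mult_notin[OF Q H sQ] by (auto intro!: max_locI)
    then have "c = res_class Q (Fraction_Field.Fract [:a:] [:s:])"
      unfolding c by (rule res_class_eq[OF Q])
    then show "\<exists>a s. s \<notin> contract Q \<and> c = res_class Q (Fraction_Field.Fract [:a:] [:s:])"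
      using s cQ by blast
  qed
  show ?thesis unfolding Rel_XF_def using Q FQ triv cQ by blast
qed

lemma Rel_iff: "prime_ideal p \<Longrightarrow> p \<in> Rel_XF F \<longleftrightarrow> Eroot p F"
  using Rel_to_E E_to_Rel by blast



lemma exists_prime_avoiding:
  fixes c t :: "'a::idom"
  assumes nu: "\<And>e m. c * e \<noteq> t ^ m"
  shows "\<exists>p. prime_ideal p \<and> c \<in> p \<and> t \<notin> p"
proof -
  define S where "S = {I::'a set. is_ideal I \<and> c \<in> I \<and> (\<forall>m. t ^ m \<notin> I)}"
  define I0 where "I0 = {c * r | r. True}"
  have "is_ideal I0 \<and> c \<in> I0 \<and> (\<forall>m. t ^ m \<notin> I0)"
    unfolding is_ideal_def
  proof (intro conjI ballI allI)
    show "0 \<in> I0" unfolding I0_def by (auto intro!: exI[of _ 0])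
    show "c \<in> I0" unfolding I0_def by (auto intro!: exI[of _ 1])
    show "t ^ m \<notin> I0" for m using nu[symmetric] unfolding I0_def by blast
    show "x + y \<in> I0" if hx: "x \<in> I0" "y \<in> I0" for x y
    proof -
      obtain r1 r2 where "x = c * r1" "y = c * r2" using hx unfolding I0_def by blast
      then have "x + y = c * (r1 + r2)" by (simp add: distrib_left)
      then show ?thesis unfolding I0_def by blast
    qed
    show "r * x \<in> I0" if hx: "x \<in> I0" for r x
    proof -
      obtain r1 where "x = c * r1" using hx unfolding I0_def by blast
      then have "r * x = c * (r * r1)" by (simp add: mult.left_commute)
      then show ?thesis unfolding I0_def by blast
    qed
  qed
  then have I0: "I0 \<in> S" unfolding S_def by blast
  have "\<exists>U\<in>S. \<forall>X\<in>C. X \<subseteq> U" if C: "C \<in> chains S" for C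
  proof (cases "C = {}")
    case True then show ?thesis using I0 by blast
  next
    case False
    have CS: "C \<subseteq> S" and ch: "\<forall>A\<in>C. \<forall>B\<in>C. A \<subseteq> B \<or> B \<subseteq> A"
      using C by (auto simp: chains_def chain_subset_def)
    have "\<Union>C \<in> S" unfolding S_def is_ideal_def
    proof (intro CollectI conjI ballI allI)
      show "0 \<in> \<Union>C" using False CS by (auto simp: S_def is_ideal_def)
      show "c \<in> \<Union>C" using False CS by (auto simp: S_def)
      show "t ^ m \<notin> \<Union>C" for m using CS by (auto simp: S_def)
      show "r * x \<in> \<Union>C" if hx: "x \<in> \<Union>C" for r x
      proof -
        obtain X where X: "X \<in> C" "x \<in> X" using hx by blast
        then have "is_ideal X" using CS by (auto simp: S_def)
        then have "r * x \<in> X" using X(2) by (simp add: is_ideal_def)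
        then show ?thesis using X(1) by blast
      qed
      show "x + y \<in> \<Union>C" if hx: "x \<in> \<Union>C" "y \<in> \<Union>C" for x y
      proof -
        obtain A B where "A \<in> C" "B \<in> C" "x \<in> A" "y \<in> B" using hx by blast
        note AB = this
        show ?thesis
        proof (cases "A \<subseteq> B")
          case True
          then have "is_ideal B" "x \<in> B" using CS AB by (auto simp: S_def)
          then have "x + y \<in> B" using AB(4) by (simp add: is_ideal_def)
          then show ?thesis using AB(2) by blast
        next
          case False
          then have "B \<subseteq> A" using ch AB by blast
          then have "is_ideal A" "y \<in> A" using CS AB by (auto simp: S_def)
          then have "x + y \<in> A" using AB(3) by (simp add: is_ideal_def)
          then show ?thesis using AB(1) by blast
        qed
      qed
    qed
    then show ?thesis by blast
  qed
  then obtain M where M: "M \<in> S" and Mmax: "\<forall>X\<in>S. M \<subseteq> X \<longrightarrow> X = M"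
    using Zorn_Lemma2[of S] by blast
  have Mi: "is_ideal M" "c \<in> M" "\<And>m. t ^ m \<notin> M" using M by (auto simp: S_def)
  have ext: "\<exists>m. t ^ m \<in> {x + r * a | x r. x \<in> M}" if a: "a \<notin> M" for a
  proof (rule ccontr)
    assume H: "\<not> ?thesis"
    define J where "J = {x + r * a | x r. x \<in> M}"
    have "is_ideal J \<and> c \<in> J \<and> (\<forall>m. t ^ m \<notin> J)"
      unfolding is_ideal_def
    proof (intro conjI ballI allI)
        have "(0::'a) = 0 + 0 * a" by simp
        then show "0 \<in> J" using Mi(1) unfolding J_def is_ideal_def by blast
        show "x + y \<in> J" if hx: "x \<in> J" "y \<in> J" for x y
        proof -
          obtain x1 r1 x2 r2 where "x = x1 + r1 * a" "y = x2 + r2 * a" "x1 \<in> M" "x2 \<in> M" using hx unfolding J_def by blast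
          then have "x + y = (x1 + x2) + (r1 + r2) * a" "x1 + x2 \<in> M"
            using Mi(1) unfolding is_ideal_def by (auto simp: algebra_simps)
          then show ?thesis unfolding J_def by blast
        qed
        show "r * x \<in> J" if hx: "x \<in> J" for r x
        proof -
          obtain x1 r1 where "x = x1 + r1 * a" "x1 \<in> M" using hx unfolding J_def by blast
          then have "r * x = (r * x1) + (r * r1) * a" "r * x1 \<in> M"
            using Mi(1) unfolding is_ideal_def by (auto simp: algebra_simps)
          then show ?thesis unfolding J_def by blast
        qed
      have "c = c + 0 * a" by simp
      then show "c \<in> J" unfolding J_def using Mi(2) by blast
      show "t ^ m \<notin> J" for m using H J_def by blast
    qed
    then have "J \<in> S" unfolding S_def by blast
    moreover have "M \<subseteq> J"
    proof
      fix x assume "x \<in> M"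
      moreover have "x = x + 0 * a" by simp
      ultimately show "x \<in> J" unfolding J_def by blast
    qed
    moreover have "a \<in> J"
    proof -
      have "a = 0 + 1 * a" by simp
      moreover have "(0::'a) \<in> M" using Mi(1) by (simp add: is_ideal_def)
      ultimately show ?thesis unfolding J_def by blast
    qed
    ultimately show False using Mmax a by blast
  qed
  have "prime_ideal M" unfolding prime_ideal_def
  proof (intro conjI allI impI)
    show "is_ideal M" by (rule Mi(1))
    show "M \<noteq> UNIV" using Mi(3)[of 0] by auto
    fix a b assume ab: "a * b \<in> M"
    show "a \<in> M \<or> b \<in> M"
    proof (rule ccontr)
      assume "\<not> (a \<in> M \<or> b \<in> M)"
      then obtain m k x1 r1 x2 r2 where e: "t ^ m = x1 + r1 * a" "t ^ k = x2 + r2 * b" "x1 \<in> M" "x2 \<in> M"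
        using ext by blast
      have "t ^ (m + k) = (x2 + r2 * b) * x1 + (r1 * a) * x2 + (r1 * r2) * (a * b)"
        by (simp add: power_add e algebra_simps)
      also have "\<dots> \<in> M"
      proof -
        have h: "\<And>r x. x \<in> M \<Longrightarrow> r * x \<in> M" "\<And>x y. x \<in> M \<Longrightarrow> y \<in> M \<Longrightarrow> x + y \<in> M"
          using Mi(1) unfolding is_ideal_def by blast+
        show ?thesis by (rule h(2)[OF h(2)[OF h(1)[OF e(3)] h(1)[OF e(4)]] h(1)[OF ab]])
      qed
      finally show False using Mi(3) by blast
    qed
  qed
  then show ?thesis using Mi(2) Mi(3)[of 1] by auto
qed



lemma zero_prime: "prime_ideal {0::'a::idom}"
  by (auto simp: prime_ideal_def is_ideal_def) (metis one_neq_zero singletonD UNIV_I)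

lemma dense_iff:
  "zariski_dense (Rel_XF F) \<longleftrightarrow> (\<forall>g::'a::idom. g \<noteq> 0 \<longrightarrow> (\<exists>p. prime_ideal p \<and> g \<notin> p \<and> Eroot p F))"
proof
  assume D: "zariski_dense (Rel_XF F)"
  show "\<forall>g::'a. g \<noteq> 0 \<longrightarrow> (\<exists>p. prime_ideal p \<and> g \<notin> p \<and> Eroot p F)"
  proof (intro allI impI)
    fix g :: 'a assume g: "g \<noteq> 0"
    define U where "U = {P::'a set. prime_ideal P \<and> \<not> {g} \<subseteq> P}"
    have "zariski_open U" unfolding zariski_open_def U_def by blast
    moreover have "{0} \<in> U" using g zero_prime unfolding U_def by auto
    ultimately obtain p where "p \<in> U" "p \<in> Rel_XF F" using D unfolding zariski_dense_def by blast
    then show "\<exists>p. prime_ideal p \<and> g \<notin> p \<and> Eroot p F" using Rel_iff[of p F] unfolding U_def by auto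
  qed
next
  assume R: "\<forall>g::'a. g \<noteq> 0 \<longrightarrow> (\<exists>p. prime_ideal p \<and> g \<notin> p \<and> Eroot p F)"
  have sub: "Rel_XF F \<subseteq> {P. prime_ideal P}"
    using contract_prime by (auto simp: Rel_XF_def)
  have "U \<inter> Rel_XF F \<noteq> {}" if hU: "zariski_open U" "U \<noteq> {}" for U
  proof -
    obtain I where I: "U = {P. prime_ideal P \<and> \<not> I \<subseteq> P}" using hU(1) unfolding zariski_open_def by blast
    obtain P0 where "P0 \<in> U" using hU(2) by blast
    then obtain g where g: "g \<in> I" "g \<notin> P0" "prime_ideal P0" using I by blast
    then have "g \<noteq> 0" using pi_zero[of P0] by auto
    then obtain p where p: "prime_ideal p" "g \<notin> p" "Eroot p F" using R by blast
    then have "p \<in> U" using g I by blast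
    moreover have "p \<in> Rel_XF F" using p Rel_iff[of p F] by blast
    ultimately show ?thesis by blast
  qed
  then show "zariski_dense (Rel_XF F)" using sub unfolding zariski_dense_def by blast
qed

lemma iii_g_iff:
  "(\<exists>u b p. b \<in> loc_elem (u * g) \<and> p \<in> basic_open (u * g) \<and> poly (fract_poly F) b \<in> max_loc p)
   \<longleftrightarrow> (\<exists>p. prime_ideal p \<and> g \<notin> p \<and> Eroot p F)"
proof
  assume "\<exists>u b p. b \<in> loc_elem (u * g) \<and> p \<in> basic_open (u * g) \<and> poly (fract_poly F) b \<in> max_loc p"
  then obtain u b p where H: "b \<in> loc_elem (u * g)" "prime_ideal p" "u * g \<notin> p"
     "poly (fract_poly F) b \<in> max_loc p" by (auto simp: basic_open_def)
  have "g \<notin> p" using H(2,3) pi_mult[of p g u] by auto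
  moreover have "b \<in> loc_prime p" using H(1) pi_power[OF H(2,3)] by (auto simp: loc_elem_def intro: loc_primeI)
  ultimately show "\<exists>p. prime_ideal p \<and> g \<notin> p \<and> Eroot p F" using H by blast
next
  assume "\<exists>p. prime_ideal p \<and> g \<notin> p \<and> Eroot p F"
  then obtain p b where p: "prime_ideal p" "g \<notin> p" "b \<in> loc_prime p" "poly (fract_poly F) b \<in> max_loc p" by blast
  obtain a s where as: "s \<notin> p" "b = Fraction_Field.Fract a s" using p(3) by (auto elim: loc_primeE)
  have g0: "g \<noteq> 0" using p(1,2) pi_zero[of p] by auto
  have "b = Fraction_Field.Fract (a * g) ((s * g) ^ 1)" using as g0 mult_fract_cancel[of g a s]
    by (simp add: mult.commute)
  then have "b \<in> loc_elem (s * g)" unfolding loc_elem_def by blast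
  moreover have "p \<in> basic_open (s * g)" using p as pi_mult_notin[of p s g] by (auto simp: basic_open_def)
  ultimately show "\<exists>u b p. b \<in> loc_elem (u * g) \<and> p \<in> basic_open (u * g) \<and> poly (fract_poly F) b \<in> max_loc p"
    using p(4) by blast
qed



lemma loc_elem_add:
  assumes t: "t \<noteq> 0" and x: "x \<in> loc_elem t" and y: "y \<in> loc_elem t"
  shows "x + y \<in> loc_elem t"
proof -
  obtain a n where 1: "x = Fraction_Field.Fract a (t ^ n)" using x by (auto simp: loc_elem_def)
  obtain a' m where 2: "y = Fraction_Field.Fract a' (t ^ m)" using y by (auto simp: loc_elem_def)
  have "x + y = Fraction_Field.Fract (a * t ^ m + a' * t ^ n) (t ^ (n + m))"
    using t 1 2 by (simp add: power_add)
  then show ?thesis unfolding loc_elem_def by blast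
qed

lemma loc_elem_mult:
  assumes x: "x \<in> loc_elem t" and y: "y \<in> loc_elem t"
  shows "x * y \<in> loc_elem t"
proof -
  obtain a n where 1: "x = Fraction_Field.Fract a (t ^ n)" using x by (auto simp: loc_elem_def)
  obtain a' m where 2: "y = Fraction_Field.Fract a' (t ^ m)" using y by (auto simp: loc_elem_def)
  have "x * y = Fraction_Field.Fract (a * a') (t ^ (n + m))"
    using 1 2 by (simp add: power_add)
  then show ?thesis unfolding loc_elem_def by blast
qed

lemma loc_elem_const: "Fraction_Field.Fract a 1 \<in> loc_elem t"
  unfolding loc_elem_def by (auto intro!: exI[of _ a] exI[of _ "0::nat"])

lemma poly_loc_elem:
  assumes t: "t \<noteq> 0" and x: "x \<in> loc_elem t"
  shows "poly (fract_poly F) x \<in> loc_elem t"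
proof (induction F)
  case 0 then show ?case using loc_elem_const[of 0 t] by (simp add: Zero_fract_def)
next
  case (pCons a F)
  have "Fraction_Field.Fract a 1 + x * poly (fract_poly F) x \<in> loc_elem t"
    using loc_elem_add[OF t] loc_elem_mult[OF x] loc_elem_const pCons(2) by blast
  then show ?case by (simp add: fract_poly_pCons)
qed

lemma ii_g_iff:
  "(\<exists>u b. b \<in> loc_elem (u * g) \<and> poly (fract_poly F) b \<notin> loc_units (u * g))
   \<longleftrightarrow> (\<exists>p. prime_ideal p \<and> g \<notin> p \<and> Eroot p F)"
proof
  assume "\<exists>p. prime_ideal p \<and> g \<notin> p \<and> Eroot p F"
  then obtain u b p where H: "b \<in> loc_elem (u * g)" "p \<in> basic_open (u * g)" "poly (fract_poly F) b \<in> max_loc p"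
    using iii_g_iff by blast
  define t where "t = u * g"
  have p: "prime_ideal p" "t \<notin> p" using H(2) by (auto simp: basic_open_def t_def)
  have t0: "t \<noteq> 0" using p pi_zero[of p] by auto
  obtain c s' where cs: "c \<in> p" "s' \<notin> p" "poly (fract_poly F) b = Fraction_Field.Fract c s'"
    using H(3) by (auto elim: max_locE)
  have "poly (fract_poly F) b * y \<noteq> 1" if y: "y \<in> loc_elem t" for y
  proof
    assume e: "poly (fract_poly F) b * y = 1"
    obtain e' n where y': "y = Fraction_Field.Fract e' (t ^ n)" using y by (auto simp: loc_elem_def)
    have nz: "s' * t ^ n \<noteq> 0" using pi_nz[OF p(1) pi_mult_notin[OF p(1) cs(2) pi_power[OF p]]] .
    have "Fraction_Field.Fract (c * e') (s' * t ^ n) = Fraction_Field.Fract 1 1"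
      using e cs(3) y' by (simp add: One_fract_def)
    then have "c * e' = s' * t ^ n" using nz eq_fract(1)[of "s' * t ^ n" 1 "c * e'" 1] by simp
    moreover have "c * e' \<in> p" using pi_mult2[OF p(1) cs(1)] .
    ultimately show False using pi_mult_notin[OF p(1) cs(2) pi_power[OF p]] by simp
  qed
  then have "poly (fract_poly F) b \<notin> loc_units t" using t0 by (auto simp: loc_units_def)
  then show "\<exists>u b. b \<in> loc_elem (u * g) \<and> poly (fract_poly F) b \<notin> loc_units (u * g)"
    using H(1) t_def by blast
next
  assume "\<exists>u b. b \<in> loc_elem (u * g) \<and> poly (fract_poly F) b \<notin> loc_units (u * g)"
  then obtain u b where H: "b \<in> loc_elem (u * g)" "poly (fract_poly F) b \<notin> loc_units (u * g)" by blast
  define t where "t = u * g"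
  have t0: "t \<noteq> 0"
  proof
    assume t: "t = 0"
    obtain a n where b: "b = Fraction_Field.Fract a (t ^ n)" using H(1) by (auto simp: loc_elem_def t_def)
    have "b = Fraction_Field.Fract a 1 \<or> b = Fraction_Field.Fract 0 1"
      using b t by (cases n) (auto simp: eq_fract)
    then obtain a' where "b = Fraction_Field.Fract a' 1" by blast
    then have "poly (fract_poly F) b \<in> loc_elem t"
      by (simp add: poly_fract_poly_const loc_elem_const)
    then show False using H(2) t by (simp add: loc_units_def t_def)
  qed
  have "poly (fract_poly F) b \<in> loc_elem t" using poly_loc_elem[OF t0] H(1) t_def by blast
  then obtain c n where c: "poly (fract_poly F) b = Fraction_Field.Fract c (t ^ n)" by (auto simp: loc_elem_def)
  have nu: "c * e \<noteq> t ^ m" for e m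
  proof
    assume ce: "c * e = t ^ m"
    define y where "y = Fraction_Field.Fract (e * t ^ n) (t ^ m)"
    have y: "y \<in> loc_elem t" unfolding y_def loc_elem_def by blast
    have "poly (fract_poly F) b * y = Fraction_Field.Fract ((c * e) * t ^ n) (t ^ n * t ^ m)"
      by (simp add: c y_def algebra_simps)
    also have "\<dots> = 1" using ce t0 by (simp add: One_fract_def eq_fract algebra_simps)
    finally show False using H(2) y `poly (fract_poly F) b \<in> loc_elem t` t0
      by (auto simp: loc_units_def t_def)
  qed
  obtain p where p: "prime_ideal p" "c \<in> p" "t \<notin> p" using exists_prime_avoiding[OF nu] by blast
  have "g \<notin> p" using p pi_mult[of p g u] t_def by auto
  moreover have "b \<in> loc_prime p" using H(1) pi_power[OF p(1,3)] by (auto simp: loc_elem_def t_def intro: loc_primeI)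
  moreover have "poly (fract_poly F) b \<in> max_loc p" using c p pi_power[OF p(1,3)] by (auto intro: max_locI)
  ultimately show "\<exists>p. prime_ideal p \<and> g \<notin> p \<and> Eroot p F" using p by blast
qed


theorem mainTheorem8:
  fixes F :: "'a::idom poly"
  assumes "degree F > 0"
  shows "(\<forall>p::'a set. prime_ideal p \<longrightarrow>
            ((p \<in> Rel_XF F \<longleftrightarrow> kappa_has_root p F) \<and>
             (kappa_has_root p F \<longleftrightarrow>
                (\<exists>g b. g \<notin> p \<and> b \<in> loc_elem g \<and> poly (fract_poly F) b \<in> max_loc p))))
       \<and> ((zariski_dense (Rel_XF F) \<longleftrightarrow>
             (\<forall>g::'a. g \<noteq> 0 \<longrightarrow> (\<exists>u b. b \<in> loc_elem (u * g) \<and>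
                                      poly (fract_poly F) b \<notin> loc_units (u * g))))
          \<and> ((\<forall>g::'a. g \<noteq> 0 \<longrightarrow> (\<exists>u b. b \<in> loc_elem (u * g) \<and>
                                      poly (fract_poly F) b \<notin> loc_units (u * g)))
             \<longleftrightarrow> (\<forall>g::'a. g \<noteq> 0 \<longrightarrow> (\<exists>u b p. b \<in> loc_elem (u * g) \<and> p \<in> basic_open (u * g)
                                      \<and> poly (fract_poly F) b \<in> max_loc p))))"
  proof -
  have A: "\<forall>p::'a set. prime_ideal p \<longrightarrow>
            ((p \<in> Rel_XF F \<longleftrightarrow> kappa_has_root p F) \<and>
             (kappa_has_root p F \<longleftrightarrow>
                (\<exists>g b. g \<notin> p \<and> b \<in> loc_elem g \<and> poly (fract_poly F) b \<in> max_loc p)))"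
  proof (intro allI impI conjI)
    fix p :: "'a set" assume p: "prime_ideal p"
    show "p \<in> Rel_XF F \<longleftrightarrow> kappa_has_root p F" using Rel_iff[OF p] kappa_iff[OF p] by simp
    show "kappa_has_root p F \<longleftrightarrow>
                (\<exists>g b. g \<notin> p \<and> b \<in> loc_elem g \<and> poly (fract_poly F) b \<in> max_loc p)"
      using iii_iff[OF p, of F] kappa_iff[OF p] by simp
  qed
  have B: "zariski_dense (Rel_XF F) \<longleftrightarrow>
             (\<forall>g::'a. g \<noteq> 0 \<longrightarrow> (\<exists>u b. b \<in> loc_elem (u * g) \<and>
                                      poly (fract_poly F) b \<notin> loc_units (u * g)))"
    unfolding dense_iff ii_g_iff ..
  have C: "(\<forall>g::'a. g \<noteq> 0 \<longrightarrow> (\<exists>u b. b \<in> loc_elem (u * g) \<and>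
                                      poly (fract_poly F) b \<notin> loc_units (u * g)))
             \<longleftrightarrow> (\<forall>g::'a. g \<noteq> 0 \<longrightarrow> (\<exists>u b p. b \<in> loc_elem (u * g) \<and> p \<in> basic_open (u * g)
                                      \<and> poly (fract_poly F) b \<in> max_loc p))"
    unfolding ii_g_iff iii_g_iff ..
  show ?thesis using A B C by (intro conjI)
qed
end
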